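(* Let $R$ be an Armendariz ring. Then the polynomial ring $R[x]$ is a generalized right Baer ring if and only if $R$ is a generalized right Baer ring.
   Context: All rings are associative with identity. For a nonempty subset $X$ of a ring $R$, $r_R(X)=\{a\in R : xa=0 \text{ for all } x\in X\}$, and for a positive integer $n$, $X^n$ denotes the set of all products $a_1\cdots a_n$ with $a_i\in X$. A ring $R$ is generalized right Baer if for every nonempty subset $X$ of $R$ there exist a positive integer $n$ (depending on $X$) and an idempotent $e\in R$ with $r_R(X^n)=eR$. A ring $R$ is Armendariz if whenever polynomials $f(x)=\sum_{i=0}^m a_ix^i$ and $g(x)=\sum_{j=0}^n b_jx^j$ in $R[x]$ satisfy $f(x)g(x)=0$, then $a_ib_j=0$ for all $i,j$. *)

theory Defs
  imports "HOL-Algebra.UnivPoly"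
begin

definition r_ann :: "('a, 'm) ring_scheme \<Rightarrow> 'a set \<Rightarrow> 'a set" where
  "r_ann R X = {a \<in> carrier R. \<forall>x\<in>X. x \<otimes>\<^bsub>R\<^esub> a = \<zero>\<^bsub>R\<^esub>}"

text \<open>X^n: all products a_1 \<dots> a_n with a_i in X (intended for n \<ge> 1).\<close>
definition set_pow :: "('a, 'm) ring_scheme \<Rightarrow> 'a set \<Rightarrow> nat \<Rightarrow> 'a set" where
  "set_pow R X n = {foldr (\<lambda>a b. a \<otimes>\<^bsub>R\<^esub> b) xs \<one>\<^bsub>R\<^esub> | xs. length xs = n \<and> set xs \<subseteq> X}"

definition gen_right_baer :: "('a, 'm) ring_scheme \<Rightarrow> bool" where
  "gen_right_baer R \<longleftrightarrow>
     (\<forall>X. X \<subseteq> carrier R \<and> X \<noteq> {} \<longrightarrow>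
        (\<exists>n::nat. n > 0 \<and> (\<exists>e\<in>carrier R. e \<otimes>\<^bsub>R\<^esub> e = e \<and>
            r_ann R (set_pow R X n) = {e \<otimes>\<^bsub>R\<^esub> a | a. a \<in> carrier R})))"

definition armendariz :: "('a, 'm) ring_scheme \<Rightarrow> bool" where
  "armendariz R \<longleftrightarrow>
     (\<forall>f\<in>carrier (UP R). \<forall>g\<in>carrier (UP R).
        f \<otimes>\<^bsub>UP R\<^esub> g = \<zero>\<^bsub>UP R\<^esub> \<longrightarrow>
        (\<forall>i j. coeff (UP R) f i \<otimes>\<^bsub>R\<^esub> coeff (UP R) g j = \<zero>\<^bsub>R\<^esub>))"

end

theory Submission
  imports Defs
begin

lemma (in monoid) foldr_closed:
  "set xs \<subseteq> carrier G \<Longrightarrow> foldr (\<otimes>) xs \<one> \<in> carrier G"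
  by (induction xs) auto

context UP_ring
begin

lemma poly_zero_iff:
  "p \<in> carrier P \<Longrightarrow> (p = \<zero>\<^bsub>P\<^esub>) \<longleftrightarrow> (\<forall>n. coeff P p n = \<zero>)"
  by (auto intro: up_eqI)

lemma core:
  assumes A: "armendariz R" and p: "p \<in> carrier P" and q: "q \<in> carrier P"
  shows "p \<otimes>\<^bsub>P\<^esub> q = \<zero>\<^bsub>P\<^esub> \<longleftrightarrow> (\<forall>i j. coeff P p i \<otimes> coeff P q j = \<zero>)"
proof
  assume "p \<otimes>\<^bsub>P\<^esub> q = \<zero>\<^bsub>P\<^esub>"
  then show "\<forall>i j. coeff P p i \<otimes> coeff P q j = \<zero>"
    using A p q unfolding armendariz_def P_def by blast
next
  assume H: "\<forall>i j. coeff P p i \<otimes> coeff P q j = \<zero>"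
  show "p \<otimes>\<^bsub>P\<^esub> q = \<zero>\<^bsub>P\<^esub>"
  proof (rule up_eqI)
    fix n
    have "coeff P (p \<otimes>\<^bsub>P\<^esub> q) n = (\<Oplus>i \<in> {..n}. coeff P p i \<otimes> coeff P q (n-i))"
      using p q by simp
    also have "\<dots> = (\<Oplus>i \<in> {..n}. \<zero>)"
      by (rule R.finsum_cong') (use H p q in auto)
    also have "\<dots> = \<zero>" by simp
    finally show "coeff P (p \<otimes>\<^bsub>P\<^esub> q) n = coeff P \<zero>\<^bsub>P\<^esub> n" by simp
  qed (use p q in auto)
qed

lemma const_mult_coeff:
  "c \<in> carrier R \<Longrightarrow> p \<in> carrier P \<Longrightarrow> coeff P (monom P c 0 \<otimes>\<^bsub>P\<^esub> p) n = c \<otimes> coeff P p n"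
  by (simp add: monom_mult_is_smult)

lemma chs_carrier:
  "list_all2 (\<lambda>a f. \<exists>i. a = coeff P f i) as fs \<Longrightarrow> set fs \<subseteq> carrier P \<Longrightarrow> set as \<subseteq> carrier R"
  by (induction rule: list_all2_induct) auto

lemma T:
  assumes A: "armendariz R"
  shows "set fs \<subseteq> carrier P \<Longrightarrow> c \<in> carrier R \<Longrightarrow> g \<in> carrier P \<Longrightarrow>
    (monom P c 0 \<otimes>\<^bsub>P\<^esub> foldr (\<otimes>\<^bsub>P\<^esub>) fs \<one>\<^bsub>P\<^esub> \<otimes>\<^bsub>P\<^esub> g = \<zero>\<^bsub>P\<^esub>) \<longleftrightarrow>
    (\<forall>as. list_all2 (\<lambda>a f. \<exists>i. a = coeff P f i) as fs \<longrightarrow>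
        (\<forall>j. c \<otimes> foldr (\<otimes>) as \<one> \<otimes> coeff P g j = \<zero>))"
proof (induction fs arbitrary: c)
  case Nil
  then show ?case
    by (simp del: coeff_mult add: poly_zero_iff const_mult_coeff)
next
  case (Cons f fs)
  have f: "f \<in> carrier P" and fs: "set fs \<subseteq> carrier P" using Cons.prems by auto
  define H where "H = foldr (\<otimes>\<^bsub>P\<^esub>) fs \<one>\<^bsub>P\<^esub> \<otimes>\<^bsub>P\<^esub> g"
  have Fc: "foldr (\<otimes>\<^bsub>P\<^esub>) fs \<one>\<^bsub>P\<^esub> \<in> carrier P" using fs by (rule P.foldr_closed)
  have Hc: "H \<in> carrier P" using Fc Cons.prems unfolding H_def by simp
  have cf: "monom P c 0 \<otimes>\<^bsub>P\<^esub> f \<in> carrier P" using Cons.prems f by simp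
  have "monom P c 0 \<otimes>\<^bsub>P\<^esub> foldr (\<otimes>\<^bsub>P\<^esub>) (f # fs) \<one>\<^bsub>P\<^esub> \<otimes>\<^bsub>P\<^esub> g
        = (monom P c 0 \<otimes>\<^bsub>P\<^esub> f) \<otimes>\<^bsub>P\<^esub> H"
    using Cons.prems f Fc unfolding H_def by (simp add: P.m_assoc)
  then have "(monom P c 0 \<otimes>\<^bsub>P\<^esub> foldr (\<otimes>\<^bsub>P\<^esub>) (f # fs) \<one>\<^bsub>P\<^esub> \<otimes>\<^bsub>P\<^esub> g = \<zero>\<^bsub>P\<^esub>)
        \<longleftrightarrow> ((monom P c 0 \<otimes>\<^bsub>P\<^esub> f) \<otimes>\<^bsub>P\<^esub> H = \<zero>\<^bsub>P\<^esub>)" by (simp only:)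
  also have "\<dots> \<longleftrightarrow> (\<forall>i k. (c \<otimes> coeff P f i) \<otimes> coeff P H k = \<zero>)"
    using core[OF A cf Hc] Cons.prems f by (simp del: coeff_mult add: const_mult_coeff)
  also have "\<dots> \<longleftrightarrow> (\<forall>i. monom P (c \<otimes> coeff P f i) 0 \<otimes>\<^bsub>P\<^esub> H = \<zero>\<^bsub>P\<^esub>)"
    using Hc Cons.prems f by (simp del: coeff_mult add: poly_zero_iff const_mult_coeff R.m_assoc)
  also have "\<dots> \<longleftrightarrow> (\<forall>i. monom P (c \<otimes> coeff P f i) 0 \<otimes>\<^bsub>P\<^esub> foldr (\<otimes>\<^bsub>P\<^esub>) fs \<one>\<^bsub>P\<^esub> \<otimes>\<^bsub>P\<^esub> g = \<zero>\<^bsub>P\<^esub>)"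
    using Fc Cons.prems f unfolding H_def by (simp add: P.m_assoc)
  also have "\<dots> \<longleftrightarrow> (\<forall>i. \<forall>as. list_all2 (\<lambda>a f. \<exists>i. a = coeff P f i) as fs \<longrightarrow>
        (\<forall>j. (c \<otimes> coeff P f i) \<otimes> foldr (\<otimes>) as \<one> \<otimes> coeff P g j = \<zero>))"
    using Cons.IH[OF fs] Cons.prems f by simp
  also have "\<dots> \<longleftrightarrow> (\<forall>as. list_all2 (\<lambda>a f. \<exists>i. a = coeff P f i) as (f # fs) \<longrightarrow>
        (\<forall>j. c \<otimes> foldr (\<otimes>) as \<one> \<otimes> coeff P g j = \<zero>))"
  proof -
    have eq: "(c \<otimes> coeff P f i) \<otimes> foldr (\<otimes>) as \<one> \<otimes> coeff P g j
             = c \<otimes> foldr (\<otimes>) (coeff P f i # as) \<one> \<otimes> coeff P g j"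
      if "list_all2 (\<lambda>a f. \<exists>i. a = coeff P f i) as fs" for i j as
    proof -
      have "set as \<subseteq> carrier R" using chs_carrier[OF that fs] .
      then have "foldr (\<otimes>) as \<one> \<in> carrier R" by (rule R.foldr_closed)
      then show ?thesis using Cons.prems f by (simp add: R.m_assoc)
    qed
    let ?L2 = "\<lambda>as fs. list_all2 (\<lambda>a f. \<exists>i. a = coeff P f i) as fs"
    show ?thesis
    proof (intro iffI allI impI)
      fix as' j
      assume L: "\<forall>i as. ?L2 as fs \<longrightarrow> (\<forall>j. (c \<otimes> coeff P f i) \<otimes> foldr (\<otimes>) as \<one> \<otimes> coeff P g j = \<zero>)"
        and A2: "?L2 as' (f # fs)"
      from A2 obtain a as where as': "as' = a # as" and a: "\<exists>i. a = coeff P f i" and las: "?L2 as fs"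
        by (cases as') auto
      from a obtain i where i: "a = coeff P f i" by blast
      have "(c \<otimes> coeff P f i) \<otimes> foldr (\<otimes>) as \<one> \<otimes> coeff P g j = \<zero>" using L las by blast
      then show "c \<otimes> foldr (\<otimes>) as' \<one> \<otimes> coeff P g j = \<zero>"
        using eq[OF las, of i j] as' i by simp
    next
      fix i as j
      assume L: "\<forall>as'. ?L2 as' (f # fs) \<longrightarrow> (\<forall>j. c \<otimes> foldr (\<otimes>) as' \<one> \<otimes> coeff P g j = \<zero>)"
        and las: "?L2 as fs"
      have "?L2 (coeff P f i # as) (f # fs)" using las by auto
      then have "c \<otimes> foldr (\<otimes>) (coeff P f i # as) \<one> \<otimes> coeff P g j = \<zero>" using L by blast
      then show "(c \<otimes> coeff P f i) \<otimes> foldr (\<otimes>) as \<one> \<otimes> coeff P g j = \<zero>"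
        using eq[OF las, of i j] by simp
    qed
  qed
  finally show ?case .
qed


lemma foldr_monom:
  "set xs \<subseteq> carrier R \<Longrightarrow>
   foldr (\<otimes>\<^bsub>P\<^esub>) (map (\<lambda>x. monom P x 0) xs) \<one>\<^bsub>P\<^esub> = monom P (foldr (\<otimes>) xs \<one>) 0"
proof (induction xs)
  case Nil then show ?case by simp
next
  case (Cons x xs)
  then have "foldr (\<otimes>) xs \<one> \<in> carrier R" by (simp add: R.foldr_closed)
  with Cons show ?case using monom_mult[of x "foldr (\<otimes>) xs \<one>" 0 0] by simp
qed

lemma list_from_image:
  "set fs \<subseteq> f ` X \<Longrightarrow> \<exists>xs. fs = map f xs \<and> set xs \<subseteq> X"
proof (induction fs)
  case Nil then show ?case by simp
next
  case (Cons a fs)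
  then obtain xs where "fs = map f xs" "set xs \<subseteq> X" by auto
  moreover obtain x where "x \<in> X" "a = f x" using Cons.prems by auto
  ultimately show ?case by (intro exI[of _ "x # xs"]) auto
qed

lemma set_pow_carrier:
  "X \<subseteq> carrier R \<Longrightarrow> set_pow R X n \<subseteq> carrier R"
  unfolding set_pow_def using R.foldr_closed by auto

lemma set_pow_monom:
  assumes X: "X \<subseteq> carrier R"
  shows "set_pow P ((\<lambda>x. monom P x 0) ` X) n = (\<lambda>w. monom P w 0) ` set_pow R X n"
proof (intro equalityI subsetI)
  fix y assume "y \<in> set_pow P ((\<lambda>x. monom P x 0) ` X) n"
  then obtain fs where fs: "y = foldr (\<otimes>\<^bsub>P\<^esub>) fs \<one>\<^bsub>P\<^esub>" "length fs = n"
      "set fs \<subseteq> (\<lambda>x. monom P x 0) ` X"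
    unfolding set_pow_def by auto
  then obtain xs where xs: "fs = map (\<lambda>x. monom P x 0) xs" "set xs \<subseteq> X"
    using list_from_image by metis
  then have "y = monom P (foldr (\<otimes>) xs \<one>) 0" using fs X foldr_monom by auto
  moreover have "foldr (\<otimes>) xs \<one> \<in> set_pow R X n" unfolding set_pow_def
    using xs fs by auto
  ultimately show "y \<in> (\<lambda>w. monom P w 0) ` set_pow R X n" by auto
next
  fix y assume "y \<in> (\<lambda>w. monom P w 0) ` set_pow R X n"
  then obtain xs where xs: "y = monom P (foldr (\<otimes>) xs \<one>) 0" "length xs = n" "set xs \<subseteq> X"
    unfolding set_pow_def by auto
  then have "y = foldr (\<otimes>\<^bsub>P\<^esub>) (map (\<lambda>x. monom P x 0) xs) \<one>\<^bsub>P\<^esub>"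
    using X foldr_monom by auto
  then show "y \<in> set_pow P ((\<lambda>x. monom P x 0) ` X) n"
    unfolding set_pow_def using xs by (auto intro!: exI[of _ "map (\<lambda>x. monom P x 0) xs"]) (use xs in force)
qed

lemma dir_down:
  assumes G: "gen_right_baer P"
  shows "gen_right_baer R"
  unfolding gen_right_baer_def
proof (intro allI impI)
  fix X assume "X \<subseteq> carrier R \<and> X \<noteq> {}"
  then have X: "X \<subseteq> carrier R" and Xne: "X \<noteq> {}" by auto
  define Y where "Y = (\<lambda>x. monom P x 0) ` X"
  have "Y \<subseteq> carrier P" "Y \<noteq> {}" using X Xne unfolding Y_def by auto
  then obtain n E where n: "n > 0" and E: "E \<in> carrier P" "E \<otimes>\<^bsub>P\<^esub> E = E"
    and RA: "r_ann P (set_pow P Y n) = {E \<otimes>\<^bsub>P\<^esub> a | a. a \<in> carrier P}"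
    using G unfolding gen_right_baer_def by blast
  define e where "e = coeff P E 0"
  have ec: "e \<in> carrier R" using E unfolding e_def by simp
  have "coeff P (E \<otimes>\<^bsub>P\<^esub> E) 0 = e \<otimes> e" using E(1) unfolding e_def by simp
  then have ee: "e \<otimes> e = e" using E(2) unfolding e_def by metis
  have SP: "set_pow P Y n = (\<lambda>w. monom P w 0) ` set_pow R X n"
    unfolding Y_def by (rule set_pow_monom[OF X])
  have SPc: "set_pow R X n \<subseteq> carrier R" by (rule set_pow_carrier[OF X])
  have "r_ann R (set_pow R X n) = {e \<otimes> a | a. a \<in> carrier R}"
  proof (intro equalityI subsetI)
    fix b assume b: "b \<in> r_ann R (set_pow R X n)"
    then have bc: "b \<in> carrier R" and bz: "\<forall>x\<in>set_pow R X n. x \<otimes> b = \<zero>"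
      unfolding r_ann_def by auto
    have "monom P b 0 \<in> r_ann P (set_pow P Y n)"
      unfolding r_ann_def SP
    proof (safe)
      show "monom P b 0 \<in> carrier P" using bc by simp
    next
      fix w assume w: "w \<in> set_pow R X n"
      then have wc: "w \<in> carrier R" using SPc by auto
      have "monom P w 0 \<otimes>\<^bsub>P\<^esub> monom P b 0 = monom P (w \<otimes> b) 0"
        using monom_mult[OF wc bc, of 0 0] by simp
      also have "\<dots> = \<zero>\<^bsub>P\<^esub>" using bz w by simp
      finally show "monom P w 0 \<otimes>\<^bsub>P\<^esub> monom P b 0 = \<zero>\<^bsub>P\<^esub>" .
    qed
    then obtain h where h: "h \<in> carrier P" "monom P b 0 = E \<otimes>\<^bsub>P\<^esub> h" using RA by auto
    have "b = coeff P (monom P b 0) 0" using bc by simp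
    also have "\<dots> = coeff P (E \<otimes>\<^bsub>P\<^esub> h) 0" by (simp only: h(2))
    also have "\<dots> = e \<otimes> coeff P h 0" using E(1) h(1) unfolding e_def by simp
    finally have "b = e \<otimes> coeff P h 0" .
    then show "b \<in> {e \<otimes> a | a. a \<in> carrier R}" using h by auto
  next
    fix y assume "y \<in> {e \<otimes> a | a. a \<in> carrier R}"
    then obtain a where a: "a \<in> carrier R" "y = e \<otimes> a" by auto
    have "E \<in> r_ann P (set_pow P Y n)" using RA E
      by (auto intro!: exI[of _ "\<one>\<^bsub>P\<^esub>"])
    then have Ez: "\<forall>w\<in>set_pow R X n. monom P w 0 \<otimes>\<^bsub>P\<^esub> E = \<zero>\<^bsub>P\<^esub>"
      unfolding r_ann_def SP by auto
    show "y \<in> r_ann R (set_pow R X n)"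
      unfolding r_ann_def
    proof (safe)
      show "y \<in> carrier R" using a ec by simp
    next
      fix w assume w: "w \<in> set_pow R X n"
      then have wc: "w \<in> carrier R" using SPc by auto
      have "coeff P (monom P w 0 \<otimes>\<^bsub>P\<^esub> E) 0 = w \<otimes> e"
        using wc E unfolding e_def by (simp add: const_mult_coeff)
      then have "w \<otimes> e = \<zero>" using Ez w by simp
      then show "w \<otimes> y = \<zero>" using a wc ec by (simp add: R.m_assoc[symmetric])
    qed
  qed
  then show "\<exists>n>0. \<exists>e\<in>carrier R. e \<otimes> e = e \<and> r_ann R (set_pow R X n) = {e \<otimes> a | a. a \<in> carrier R}"
    using n ec ee by blast
qed


lemma coeffs_choice:
  "set as \<subseteq> (\<Union>f\<in>Y. range (coeff P f)) \<Longrightarrow>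
   \<exists>fs. set fs \<subseteq> Y \<and> list_all2 (\<lambda>a f. \<exists>i. a = coeff P f i) as fs"
proof (induction as)
  case Nil then show ?case by simp
next
  case (Cons a as)
  then obtain fs where fs: "set fs \<subseteq> Y" "list_all2 (\<lambda>a f. \<exists>i. a = coeff P f i) as fs" by auto
  obtain f i where "f \<in> Y" "a = coeff P f i" using Cons.prems by auto
  then show ?case using fs by (intro exI[of _ "f # fs"]) auto
qed

lemma chs_in:
  "list_all2 (\<lambda>a f. \<exists>i. a = coeff P f i) as fs \<Longrightarrow> set fs \<subseteq> Y \<Longrightarrow>
   set as \<subseteq> (\<Union>f\<in>Y. range (coeff P f))"
  by (induction rule: list_all2_induct) auto

lemma dir_up:
  assumes A: "armendariz R" and G: "gen_right_baer R"
  shows "gen_right_baer P"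
  unfolding gen_right_baer_def
proof (intro allI impI)
  fix Y assume "Y \<subseteq> carrier P \<and> Y \<noteq> {}"
  then have Y: "Y \<subseteq> carrier P" and Yne: "Y \<noteq> {}" by auto
  define C where "C = (\<Union>f\<in>Y. range (coeff P f))"
  have Cc: "C \<subseteq> carrier R" using Y unfolding C_def by auto
  have "C \<noteq> {}" using Yne unfolding C_def by auto
  then have "\<exists>n>0. \<exists>e\<in>carrier R. e \<otimes> e = e \<and> r_ann R (set_pow R C n) = {e \<otimes> a | a. a \<in> carrier R}"
    using G[unfolded gen_right_baer_def, rule_format, of C] Cc by blast
  then obtain n e where n: "n > 0" and ec: "e \<in> carrier R" and ee: "e \<otimes> e = e"
    and RA: "r_ann R (set_pow R C n) = {e \<otimes> a | a. a \<in> carrier R}"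
    by blast
  define E where "E = monom P e 0"
  have Ec: "E \<in> carrier P" using ec unfolding E_def by simp
  have EE: "E \<otimes>\<^bsub>P\<^esub> E = E" using monom_mult[OF ec ec, of 0 0] ee unfolding E_def by (metis add_0)
  have claim: "g \<in> r_ann P (set_pow P Y n) \<longleftrightarrow> (\<forall>j. coeff P g j \<in> r_ann R (set_pow R C n))"
    if g: "g \<in> carrier P" for g
  proof
    assume gr: "g \<in> r_ann P (set_pow P Y n)"
    show "\<forall>j. coeff P g j \<in> r_ann R (set_pow R C n)"
    proof (intro allI)
      fix j
      show "coeff P g j \<in> r_ann R (set_pow R C n)"
        unfolding r_ann_def
      proof (safe)
        show "coeff P g j \<in> carrier R" using g by simp
      next
        fix w assume "w \<in> set_pow R C n"
        then obtain as where as: "w = foldr (\<otimes>) as \<one>" "length as = n" "set as \<subseteq> C"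
          unfolding set_pow_def by auto
        then obtain fs where fs: "set fs \<subseteq> Y" "list_all2 (\<lambda>a f. \<exists>i. a = coeff P f i) as fs"
          using coeffs_choice unfolding C_def by blast
        have "length fs = n" using fs(2) as(2) by (simp add: list_all2_lengthD)
        then have "foldr (\<otimes>\<^bsub>P\<^esub>) fs \<one>\<^bsub>P\<^esub> \<in> set_pow P Y n"
          unfolding set_pow_def using fs(1) by auto
        then have z: "foldr (\<otimes>\<^bsub>P\<^esub>) fs \<one>\<^bsub>P\<^esub> \<otimes>\<^bsub>P\<^esub> g = \<zero>\<^bsub>P\<^esub>"
          using gr unfolding r_ann_def by auto
        have fsc: "set fs \<subseteq> carrier P" using fs Y by auto
        have "foldr (\<otimes>\<^bsub>P\<^esub>) fs \<one>\<^bsub>P\<^esub> \<in> carrier P" using fsc by (rule P.foldr_closed)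
        then have "monom P \<one> 0 \<otimes>\<^bsub>P\<^esub> foldr (\<otimes>\<^bsub>P\<^esub>) fs \<one>\<^bsub>P\<^esub> \<otimes>\<^bsub>P\<^esub> g = \<zero>\<^bsub>P\<^esub>"
          using z by simp
        then have "\<one> \<otimes> foldr (\<otimes>) as \<one> \<otimes> coeff P g j = \<zero>"
          using T[OF A fsc R.one_closed g] fs(2) by blast
        moreover have "foldr (\<otimes>) as \<one> \<in> carrier R" using as Cc R.foldr_closed by blast
        ultimately show "w \<otimes> coeff P g j = \<zero>" using as(1) by simp
      qed
    qed
  next
    assume H: "\<forall>j. coeff P g j \<in> r_ann R (set_pow R C n)"
    show "g \<in> r_ann P (set_pow P Y n)"
      unfolding r_ann_def
    proof (safe)
      show "g \<in> carrier P" by (rule g)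
    next
      fix y assume "y \<in> set_pow P Y n"
      then obtain fs where fs: "y = foldr (\<otimes>\<^bsub>P\<^esub>) fs \<one>\<^bsub>P\<^esub>" "length fs = n" "set fs \<subseteq> Y"
        unfolding set_pow_def by auto
      have fsc: "set fs \<subseteq> carrier P" using fs Y by auto
      have yc: "y \<in> carrier P" using fsc fs(1) P.foldr_closed by blast
      have "\<forall>as. list_all2 (\<lambda>a f. \<exists>i. a = coeff P f i) as fs \<longrightarrow>
          (\<forall>j. \<one> \<otimes> foldr (\<otimes>) as \<one> \<otimes> coeff P g j = \<zero>)"
      proof (intro allI impI)
        fix as j assume las: "list_all2 (\<lambda>a f. \<exists>i. a = coeff P f i) as fs"
        have "set as \<subseteq> C" using chs_in[OF las fs(3)] unfolding C_def .
        moreover have "length as = n" using las fs(2) by (simp add: list_all2_lengthD)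
        ultimately have w: "foldr (\<otimes>) as \<one> \<in> set_pow R C n" unfolding set_pow_def by auto
        have "foldr (\<otimes>) as \<one> \<in> carrier R" using \<open>set as \<subseteq> C\<close> Cc R.foldr_closed by blast
        then show "\<one> \<otimes> foldr (\<otimes>) as \<one> \<otimes> coeff P g j = \<zero>"
          using H w unfolding r_ann_def by auto
      qed
      then have "monom P \<one> 0 \<otimes>\<^bsub>P\<^esub> y \<otimes>\<^bsub>P\<^esub> g = \<zero>\<^bsub>P\<^esub>"
        using T[OF A fsc R.one_closed g] fs(1) by blast
      then show "y \<otimes>\<^bsub>P\<^esub> g = \<zero>\<^bsub>P\<^esub>" using yc by simp
    qed
  qed
  have "r_ann P (set_pow P Y n) = {E \<otimes>\<^bsub>P\<^esub> a | a. a \<in> carrier P}"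
  proof (intro equalityI subsetI)
    fix g assume gr: "g \<in> r_ann P (set_pow P Y n)"
    then have g: "g \<in> carrier P" unfolding r_ann_def by auto
    have "\<forall>j. coeff P g j \<in> {e \<otimes> a | a. a \<in> carrier R}" using claim[OF g] gr RA by simp
    have ej: "e \<otimes> coeff P g j = coeff P g j" for j
    proof -
      obtain a where a: "a \<in> carrier R" "coeff P g j = e \<otimes> a"
        using \<open>\<forall>j. coeff P g j \<in> {e \<otimes> a | a. a \<in> carrier R}\<close> by blast
      have "e \<otimes> (e \<otimes> a) = (e \<otimes> e) \<otimes> a" using a ec by (simp add: R.m_assoc)
      then show ?thesis using a ee by simp
    qed
    have "E \<otimes>\<^bsub>P\<^esub> g = g"
      by (rule up_eqI) (use Ec g ec ej in \<open>simp_all del: coeff_mult add: E_def const_mult_coeff\<close>)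
    then show "g \<in> {E \<otimes>\<^bsub>P\<^esub> a | a. a \<in> carrier P}" using g by force
  next
    fix y assume "y \<in> {E \<otimes>\<^bsub>P\<^esub> a | a. a \<in> carrier P}"
    then obtain h where h: "h \<in> carrier P" "y = E \<otimes>\<^bsub>P\<^esub> h" by auto
    have yc: "y \<in> carrier P" using h Ec by simp
    have "coeff P y j \<in> r_ann R (set_pow R C n)" for j
      using h ec unfolding RA by (auto simp del: coeff_mult simp add: E_def const_mult_coeff)
    then show "y \<in> r_ann P (set_pow P Y n)" using claim[OF yc] by blast
  qed
  then show "\<exists>n>0. \<exists>E\<in>carrier P. E \<otimes>\<^bsub>P\<^esub> E = E \<and>
      r_ann P (set_pow P Y n) = {E \<otimes>\<^bsub>P\<^esub> a | a. a \<in> carrier P}"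
    using n Ec EE by blast
qed

end

theorem corollary3p12:
  fixes R :: "('a, 'm) ring_scheme"
  assumes "ring R" and "armendariz R"
  shows "gen_right_baer (UP R) \<longleftrightarrow> gen_right_baer R"
proof -
  have U: "UP_ring R" using assms(1) by (simp add: UP_ring_def)
  show ?thesis using UP_ring.dir_up[OF U assms(2)] UP_ring.dir_down[OF U] by blast
qed

end
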